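(* In the unknown-variance Gaussian prediction model described in the context, let $a\in\mathbb{R}$ with $\nu=d/2+a+1>0$, let $f:(0,1)\to[0,\infty)$, and let $\hat p_{\mathrm{GM}}$ be the Bayesian predictive density with respect to the prior $$\pi_{\mathrm{GM}}(\mu,\eta)=\int_0^1\phi\{\mu;0,\eta^{-1}\lambda^{-1}(1-\lambda)\}\,\eta^{a}\lambda^{a}f(\lambda)\,d\lambda.$$ Then $$\hat p_{\mathrm{GM}}(y\mid\bar x_n,s_n)=c\left(\frac{s_{n+1}}{s_n}\right)^{-\nu}\frac{J_{n+1}}{J_n}\,\hat p_R(y\mid\bar x_n,s_n),\qquad c=\left(1+\frac1n\right)^{\nu}\frac{B\{\nu,(n-1)d/2\}}{B(\nu,nd/2)},$$ where for $l\in\{n,n+1\}$, $$J_l=\int_0^1\frac{\lambda^{\nu-1}\{1+(l-1)\lambda\}^{d/2-\nu-1}}{(1+w_l\lambda)^{(l-1)d/2+\nu}}\,f\!\left\{\frac{l\lambda}{1+(l-1)\lambda}\right\}d\lambda,\qquad w_l=\frac{l\|\bar x_l\|^2}{s_l}.$$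
   Context: Model: $x_1,\dots,x_n,y$ ($n\ge2$, $d\ge1$) are independent with $x_i\sim N_d(\mu,\eta^{-1}I_d)$ and $y\sim N_d(\mu,\eta^{-1}I_d)$, where $\mu\in\mathbb{R}^d$ and $\eta=1/\sigma^2>0$ are unknown; $\bar x_n=n^{-1}\sum_i x_i$, $s_n=\sum_i\|x_i-\bar x_n\|^2$, $\bar x_{n+1}=(n\bar x_n+y)/(n+1)$, $s_{n+1}=s_n+n\|y-\bar x_n\|^2/(n+1)$. $\phi(\cdot;\theta,\tau)$ is the $N_d(\theta,\tau I_d)$ density, $\gamma(\cdot;k)$ the chi-square density with $k$ degrees of freedom, $B(\cdot,\cdot)$ the Beta function. For a (possibly improper) prior density $\pi(\mu,\eta)$, the Bayesian predictive density is $$\hat p_\pi(y\mid\bar x_n,s_n)=\frac{\iint \phi(y;\mu,\eta^{-1})\,\phi(\bar x_n;\mu,n^{-1}\eta^{-1})\,\eta\gamma\{\eta s_n;(n-1)d\}\,\pi(\mu,\eta)\,d\mu\,d\eta}{\iint \phi(\bar x_n;\mu,n^{-1}\eta^{-1})\,\eta\gamma\{\eta s_n;(n-1)d\}\,\pi(\mu,\eta)\,d\mu\,d\eta}.$$ The best equivariant predictive density is $\hat p_R(y\mid\bar x_n,s_n)=\frac{\Gamma(nd/2)}{\Gamma\{(n-1)d/2\}}\left(\frac{1}{\pi s_n}\frac{n}{n+1}\right)^{d/2}\left(1+\frac{1}{s_n}\frac{n}{n+1}\|y-\bar x_n\|^2\right)^{-nd/2}$. *)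

theory Defs
  imports "HOL-Analysis.Analysis"
begin

definition gauss_dens :: "real^'d \<Rightarrow> real^'d \<Rightarrow> real \<Rightarrow> real" where
  "gauss_dens y \<theta> \<tau> =
     (2 * pi * \<tau>) powr (- real CARD('d) / 2) * exp (- (norm (y - \<theta>))\<^sup>2 / (2 * \<tau>))"

definition chisq_dens :: "real \<Rightarrow> real \<Rightarrow> real" where
  "chisq_dens k t =
     (if t > 0 then t powr (k / 2 - 1) * exp (- t / 2) / (2 powr (k / 2) * Gamma (k / 2)) else 0)"

definition sample_mean :: "(nat \<Rightarrow> real^'d) \<Rightarrow> nat \<Rightarrow> real^'d" where
  "sample_mean x n = (1 / real n) *\<^sub>R (\<Sum>i<n. x i)"

definition sample_ss :: "(nat \<Rightarrow> real^'d) \<Rightarrow> nat \<Rightarrow> real" where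
  "sample_ss x n = (\<Sum>i<n. (norm (x i - sample_mean x n))\<^sup>2)"

definition mean_upd :: "nat \<Rightarrow> real^'d \<Rightarrow> real^'d \<Rightarrow> real^'d" where
  "mean_upd n xb y = (1 / (real n + 1)) *\<^sub>R (real n *\<^sub>R xb + y)"

definition ss_upd :: "nat \<Rightarrow> real^'d \<Rightarrow> real \<Rightarrow> real^'d \<Rightarrow> real" where
  "ss_upd n xb s y = s + real n * (norm (y - xb))\<^sup>2 / (real n + 1)"

definition pred_num :: "nat \<Rightarrow> (real^'d \<Rightarrow> real \<Rightarrow> ennreal) \<Rightarrow> real^'d \<Rightarrow> real^'d \<Rightarrow> real \<Rightarrow> ennreal" where
  "pred_num n \<pi> y xb s =
     (\<integral>\<^sup>+ \<eta>. indicator {0<..} \<eta> *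
        (\<integral>\<^sup>+ \<mu>. ennreal (gauss_dens y \<mu> (1 / \<eta>) * gauss_dens xb \<mu> (1 / (real n * \<eta>)) * \<eta>
                   * chisq_dens (real (n - 1) * real CARD('d)) (\<eta> * s)) * \<pi> \<mu> \<eta> \<partial>lborel) \<partial>lborel)"

definition pred_den :: "nat \<Rightarrow> (real^'d \<Rightarrow> real \<Rightarrow> ennreal) \<Rightarrow> real^'d \<Rightarrow> real \<Rightarrow> ennreal" where
  "pred_den n \<pi> xb s =
     (\<integral>\<^sup>+ \<eta>. indicator {0<..} \<eta> *
        (\<integral>\<^sup>+ \<mu>. ennreal (gauss_dens xb \<mu> (1 / (real n * \<eta>)) * \<eta>
                   * chisq_dens (real (n - 1) * real CARD('d)) (\<eta> * s)) * \<pi> \<mu> \<eta> \<partial>lborel) \<partial>lborel)"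

definition bayes_pred :: "nat \<Rightarrow> (real^'d \<Rightarrow> real \<Rightarrow> ennreal) \<Rightarrow> real^'d \<Rightarrow> real^'d \<Rightarrow> real \<Rightarrow> real" where
  "bayes_pred n \<pi> y xb s = enn2real (pred_num n \<pi> y xb s) / enn2real (pred_den n \<pi> xb s)"

definition pred_R :: "nat \<Rightarrow> real^'d \<Rightarrow> real^'d \<Rightarrow> real \<Rightarrow> real" where
  "pred_R n y xb s =
     Gamma (real n * real CARD('d) / 2) / Gamma (real (n - 1) * real CARD('d) / 2)
     * (1 / (pi * s) * (real n / (real n + 1))) powr (real CARD('d) / 2)
     * (1 + 1 / s * (real n / (real n + 1)) * (norm (y - xb))\<^sup>2) powr (- real n * real CARD('d) / 2)"

definition prior_GM :: "real \<Rightarrow> (real \<Rightarrow> real) \<Rightarrow> real^'d \<Rightarrow> real \<Rightarrow> ennreal" where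
  "prior_GM a f \<mu> \<eta> =
     (\<integral>\<^sup>+ u. indicator {0<..<1} u *
        ennreal (gauss_dens \<mu> 0 ((1 - u) / (\<eta> * u)) * \<eta> powr a * u powr a * f u) \<partial>lborel)"

definition J_GM :: "real \<Rightarrow> real \<Rightarrow> (real \<Rightarrow> real) \<Rightarrow> nat \<Rightarrow> real \<Rightarrow> real" where
  "J_GM d \<nu> f l w =
     enn2real (\<integral>\<^sup>+ u. indicator {0<..<1} u *
        ennreal (u powr (\<nu> - 1) * (1 + (real l - 1) * u) powr (d / 2 - \<nu> - 1)
                 / (1 + w * u) powr ((real l - 1) * d / 2 + \<nu>)
                 * f (real l * u / (1 + (real l - 1) * u))) \<partial>lborel)"

end

theory Submission
  imports Defs "HOL-Probability.Distributions"
begin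

lemma normal_nn1:
  assumes "s > 0"
  shows "(\<integral>\<^sup>+x. ennreal (normal_density m s x) \<partial>lborel) = 1"
proof -
  have "(\<integral>\<^sup>+x. ennreal (normal_density m s x) \<partial>lborel) = ennreal (\<integral>x. normal_density m s x \<partial>lborel)"
    by (rule nn_integral_eq_integral) (auto intro: integrable_normal_density[OF assms])
  then show ?thesis using integral_normal_density[OF assms] by simp
qed

lemma gauss_prod_form:
  fixes \<mu> c :: "real^'d"
  assumes "\<tau> > 0"
  shows "gauss_dens \<mu> c \<tau> = (\<Prod>b\<in>Basis. normal_density (c \<bullet> b) (sqrt \<tau>) (\<mu> \<bullet> b))"
proof -
  have n0: "(norm v)\<^sup>2 = (\<Sum>b\<in>Basis. (v \<bullet> b)\<^sup>2)" for v :: "real^'d"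
    unfolding power2_norm_eq_inner by (subst euclidean_inner) (simp add: power2_eq_square)
  have n: "(norm (\<mu> - c))\<^sup>2 = (\<Sum>b\<in>Basis. (\<mu> \<bullet> b - c \<bullet> b)\<^sup>2)"
    by (simp add: n0 inner_diff_left)
  have "(\<Prod>b\<in>Basis. normal_density (c \<bullet> b) (sqrt \<tau>) (\<mu> \<bullet> b))
      = (\<Prod>b\<in>(Basis::(real^'d) set). (2*pi*\<tau>) powr (-1/2) * exp (- (\<mu> \<bullet> b - c \<bullet> b)\<^sup>2 / (2*\<tau>)))"
    using assms by (intro prod.cong) (auto simp: normal_density_def powr_minus_divide powr_half_sqrt power2_commute[of "\<mu> \<bullet> _"])
  also have "\<dots> = ((2*pi*\<tau>) powr (-1/2)) ^ CARD('d) * exp (\<Sum>b\<in>(Basis::(real^'d) set). - (\<mu> \<bullet> b - c \<bullet> b)\<^sup>2 / (2*\<tau>))"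
    by (simp add: prod.distrib exp_sum)
  also have "\<dots> = gauss_dens \<mu> c \<tau>"
    unfolding gauss_dens_def n using assms
    by (simp add: powr_realpow[symmetric] powr_powr sum_divide_distrib[symmetric] sum_negf)
  finally show ?thesis ..
qed

lemma gauss_int:
  fixes c :: "real^'d"
  assumes "\<tau> > 0"
  shows "(\<integral>\<^sup>+\<mu>. ennreal (gauss_dens \<mu> c \<tau>) \<partial>lborel) = 1"
  using assms
  apply (simp add: gauss_prod_form prod_ennreal[symmetric])
  apply (subst nn_integral_lborel_prod)
  apply (auto simp: normal_nn1)
  done

lemma norm_sq_basis: "(norm v)\<^sup>2 = (\<Sum>b\<in>Basis. (v \<bullet> b)\<^sup>2)" for v :: "real^'d"
  unfolding power2_norm_eq_inner by (subst euclidean_inner) (simp add: power2_eq_square)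

lemma gauss_sym: "gauss_dens p q t = gauss_dens q p t"
  unfolding gauss_dens_def by (simp add: norm_minus_commute)

lemma coord_id:
  fixes a b x t1 t2 :: real
  assumes "t1 > 0" "t2 > 0"
  shows "(a - x)\<^sup>2 / t1 + (b - x)\<^sup>2 / t2 = (a - b)\<^sup>2 / (t1 + t2)
     + (x - (t2 / (t1 + t2) * a + t1 / (t1 + t2) * b))\<^sup>2 / (t1 * t2 / (t1 + t2))"
proof -
  define T where "T = t1 + t2"
  have T: "T > 0" using assms by (simp add: T_def)
  have poly: "T * t2 * (a - x)\<^sup>2 + T * t1 * (b - x)\<^sup>2 = t1 * t2 * (a - b)\<^sup>2 + (T * x - t2 * a - t1 * b)\<^sup>2"
    unfolding T_def by (simp add: power2_eq_square algebra_simps)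
  have e1: "x - (t2 / T * a + t1 / T * b) = (T * x - t2 * a - t1 * b) / T"
    using T by (simp add: field_simps)
  have "(a - x)\<^sup>2 / t1 + (b - x)\<^sup>2 / t2 = (T * t2 * (a - x)\<^sup>2 + T * t1 * (b - x)\<^sup>2) / (T * t1 * t2)"
    using assms T by (simp add: field_simps)
  also have "\<dots> = (t1 * t2 * (a - b)\<^sup>2 + (T * x - t2 * a - t1 * b)\<^sup>2) / (T * t1 * t2)"
    by (simp only: poly)
  also have "\<dots> = (a - b)\<^sup>2 / T + ((T * x - t2 * a - t1 * b) / T)\<^sup>2 / (t1 * t2 / T)"
    using assms T by (simp add: field_simps power2_eq_square)
  finally have X: "(a - x)\<^sup>2 / t1 + (b - x)\<^sup>2 / t2 = (a - b)\<^sup>2 / T + ((T * x - t2 * a - t1 * b) / T)\<^sup>2 / (t1 * t2 / T)" .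
  show ?thesis unfolding T_def[symmetric] e1 by (rule X)
qed

lemma norm_id:
  fixes p q \<mu> :: "real^'d"
  assumes "t1 > 0" "t2 > 0"
  shows "(norm (p - \<mu>))\<^sup>2 / t1 + (norm (q - \<mu>))\<^sup>2 / t2 = (norm (p - q))\<^sup>2 / (t1 + t2)
     + (norm (\<mu> - ((t2 / (t1 + t2)) *\<^sub>R p + (t1 / (t1 + t2)) *\<^sub>R q)))\<^sup>2 / (t1 * t2 / (t1 + t2))"
  unfolding norm_sq_basis sum_divide_distrib sum.distrib[symmetric]
  by (intro sum.cong refl) (simp add: inner_diff_left inner_add_left coord_id[OF assms])

lemma gauss_prod:
  fixes p q \<mu> :: "real^'d"
  assumes "t1 > 0" "t2 > 0"
  shows "gauss_dens p \<mu> t1 * gauss_dens q \<mu> t2 = gauss_dens p q (t1 + t2)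
     * gauss_dens \<mu> ((t2 / (t1 + t2)) *\<^sub>R p + (t1 / (t1 + t2)) *\<^sub>R q) (t1 * t2 / (t1 + t2))"
proof -
  have c: "(2 * pi * t1) powr e * (2 * pi * t2) powr e = (2 * pi * (t1 + t2)) powr e * (2 * pi * (t1 * t2 / (t1 + t2))) powr e" for e
  proof -
    have "(2 * pi * (t1 + t2)) * (2 * pi * (t1 * t2 / (t1 + t2))) = (2 * pi * t1) * (2 * pi * t2)"
      using assms by (simp add: field_simps)
    then show ?thesis using assms by (subst (1 2) powr_mult[symmetric]) (simp_all add: mult_ac)
  qed
  have ex: "exp (- (norm (p - \<mu>))\<^sup>2 / (2 * t1)) * exp (- (norm (q - \<mu>))\<^sup>2 / (2 * t2))
     = exp (- (norm (p - q))\<^sup>2 / (2 * (t1 + t2))) * exp (- (norm (\<mu> - ((t2 / (t1 + t2)) *\<^sub>R p + (t1 / (t1 + t2)) *\<^sub>R q)))\<^sup>2 / (2 * (t1 * t2 / (t1 + t2))))"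
  proof -
    have h: "- u / (2 * t) = - (u / t) / 2" for u t :: real by simp
    have h2: "- x / 2 + - y / 2 = - (x + y) / (2::real)" for x y by simp
    show ?thesis unfolding exp_add[symmetric] h h2 norm_id[OF assms, of p \<mu> q] by (simp only:)
  qed
  show ?thesis unfolding gauss_dens_def
    using c ex by (metis (no_types, lifting) mult.commute mult.left_commute)
qed

lemma gamma_int:
  fixes p c :: real
  assumes p: "p > -1" and c: "c > 0"
  shows "(\<integral>\<^sup>+\<eta>. indicator {0<..} \<eta> * ennreal (\<eta> powr p * exp (- c * \<eta>)) \<partial>lborel)
        = ennreal (Gamma (p + 1) / c powr (p + 1))"
proof -
  define I where "I = (\<integral>\<^sup>+\<eta>. indicator {0<..} \<eta> * ennreal (\<eta> powr p * exp (- c * \<eta>)) \<partial>lborel)"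
  have "ennreal (Gamma (p + 1)) = (\<integral>\<^sup>+t. ennreal (indicator {0..} t * t powr (p + 1 - 1) / exp t) \<partial>lborel)"
    using Gamma_conv_nn_integral_real[of "p+1"] p by simp
  also have "\<dots> = ennreal \<bar>c\<bar> * (\<integral>\<^sup>+x. ennreal (indicator {0..} (0 + c * x) * (0 + c * x) powr (p + 1 - 1) / exp (0 + c * x)) \<partial>lborel)"
    by (rule nn_integral_real_affine) (use c in auto)
  also have "(\<integral>\<^sup>+x. ennreal (indicator {0..} (0 + c * x) * (0 + c * x) powr (p + 1 - 1) / exp (0 + c * x)) \<partial>lborel)
      = (\<integral>\<^sup>+x. ennreal (c powr p) * (indicator {0<..} x * ennreal (x powr p * exp (- c * x))) \<partial>lborel)"
  proof (intro nn_integral_cong)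
    fix x :: real
    show "ennreal (indicator {0..} (0 + c * x) * (0 + c * x) powr (p + 1 - 1) / exp (0 + c * x))
      = ennreal (c powr p) * (indicator {0<..} x * ennreal (x powr p * exp (- c * x)))"
    proof (cases "x > 0")
      case True
      then show ?thesis using c
        by (simp add: powr_mult ennreal_mult[symmetric] exp_minus field_simps)
    next
      case False
      then have "x = 0 \<or> x < 0" by auto
      then show ?thesis using c
        by (auto simp: indicator_def zero_le_mult_iff)
    qed
  qed
  also have "\<dots> = ennreal (c powr p) * I"
    unfolding I_def by (rule nn_integral_cmult) auto
  finally have G0: "ennreal (Gamma (p + 1)) = ennreal \<bar>c\<bar> * (ennreal (c powr p) * I)" .
  have cp: "c powr (p + 1) = c * c powr p" using c by (simp add: powr_add)
  have G: "ennreal (Gamma (p + 1)) = ennreal (c powr (p + 1)) * I"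
    unfolding G0 cp using c by (simp add: ennreal_mult mult.assoc)
  have "ennreal (Gamma (p + 1) / c powr (p + 1)) = ennreal (1 / c powr (p + 1)) * ennreal (Gamma (p + 1))"
    by (subst ennreal_mult'[symmetric]) (use c in simp_all)
  also have "\<dots> = ennreal (1 / c powr (p + 1) * c powr (p + 1)) * I"
    unfolding G using c by (subst ennreal_mult) (auto simp: mult.assoc)
  also have "\<dots> = I" using c by simp
  finally show ?thesis unfolding I_def ..
qed

lemma subst_lemma:
  fixes G :: "real \<Rightarrow> real" and m :: real
  assumes m: "m \<ge> 1" and G[measurable]: "G \<in> borel_measurable borel"
  shows "(\<integral>\<^sup>+u. indicator {0<..<1} u * ennreal (G u) \<partial>lborel)
    = (\<integral>\<^sup>+t. indicator {0<..<1} t * ennreal (G (m * t / (1 + (m - 1) * t)) * (m / (1 + (m - 1) * t)\<^sup>2)) \<partial>lborel)"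
proof -
  define g where "g t = m * t / (1 + (m - 1) * t)" for t
  define g' where "g' t = m / (1 + (m - 1) * t)\<^sup>2" for t
  define F where "F u = indicator {0<..<1} u * G u" for u
  have pos: "1 + (m - 1) * t > 0" if "t \<ge> 0" for t
    using m that by (simp add: add_pos_nonneg)
  have g0: "g 0 = 0" and g1: "g 1 = 1" using m by (auto simp: g_def)
  have deriv: "(g has_real_derivative g' t) (at t)" if "t \<in> {0..1}" for t
  proof -
    have p: "1 + (m - 1) * t \<noteq> 0" using pos[of t] that by auto
    have "(g has_real_derivative ((m * (1 + (m - 1) * t) - m * t * (m - 1)) / (1 + (m - 1) * t)\<^sup>2)) (at t)"
      unfolding g_def power2_eq_square
      by (rule derivative_eq_intros refl | use p in simp)+
    moreover have "(m * (1 + (m - 1) * t) - m * t * (m - 1)) = m" by (simp add: algebra_simps)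
    ultimately show ?thesis by (simp add: g'_def)
  qed
  have cont: "continuous_on {0..1} g'"
    unfolding g'_def by (intro continuous_intros) (use pos in force)
  have g'nn: "g' t \<ge> 0" for t using m by (simp add: g'_def)
  have gin: "g t \<in> {0<..<1} \<longleftrightarrow> t \<in> {0<..<1}" if "t \<in> {0..1}" for t
  proof -
    have p: "1 + (m - 1) * t > 0" using pos[of t] that by auto
    have "g t > 0 \<longleftrightarrow> t > 0" using p m that by (auto simp: g_def zero_less_divide_iff zero_less_mult_iff)
    moreover have "g t < 1 \<longleftrightarrow> t < 1" using p m that by (simp add: g_def divide_less_eq algebra_simps)
    ultimately show ?thesis by auto
  qed
  have "(\<integral>\<^sup>+u. indicator {0<..<1} u * ennreal (G u) \<partial>lborel) = (\<integral>\<^sup>+x. F x * indicator {g 0..g 1} x \<partial>lborel)"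
    by (intro nn_integral_cong) (auto simp: F_def g0 g1 indicator_def)
  also have "\<dots> = (\<integral>\<^sup>+x. F (g x) * g' x * indicator {0..1} x \<partial>lborel)"
    by (rule nn_integral_substitution[OF _ deriv cont g'nn]) (auto simp: F_def set_borel_measurable_def)
  also have "\<dots> = (\<integral>\<^sup>+t. indicator {0<..<1} t * ennreal (G (g t) * g' t) \<partial>lborel)"
  proof (intro nn_integral_cong)
    fix t :: real
    show "ennreal (F (g t) * g' t * indicator {0..1} t) = indicator {0<..<1} t * ennreal (G (g t) * g' t)"
    proof (cases "t \<in> {0..1}")
      case True
      then show ?thesis using gin[OF True] by (auto simp: F_def indicator_def)
    next
      case False
      then show ?thesis by (auto simp: indicator_def)
    qed
  qed
  finally show ?thesis by (simp add: g_def g'_def)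
qed

lemma gauss_meas[measurable (raw)]:
  assumes [measurable]: "A \<in> borel_measurable M" "B \<in> borel_measurable M" "C \<in> borel_measurable M"
  shows "(\<lambda>x. gauss_dens (A x) (B x) (C x)) \<in> borel_measurable M"
  unfolding gauss_dens_def by measurable

lemma gauss_pos: "\<tau> > 0 \<Longrightarrow> gauss_dens y c \<tau> > 0"
  unfolding gauss_dens_def by simp

lemma inner_mu:
  fixes z :: "real^'d" and h :: "real \<Rightarrow> real"
  assumes eta: "\<eta> > 0" and m: "m > 0" and K: "K \<ge> 0" and E: "E \<ge> 0"
    and h[measurable]: "h \<in> borel_measurable borel" and hnn: "\<And>u. h u \<ge> 0"
  shows "(\<integral>\<^sup>+\<mu>. ennreal (K * gauss_dens z \<mu> (1 / (m * \<eta>)) * E) * prior_GM a h \<mu> \<eta> \<partial>lborel)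
    = (\<integral>\<^sup>+u. indicator {0<..<1} u * ennreal (K * E * gauss_dens z 0 (1 / (m * \<eta>) + (1 - u) / (\<eta> * u))
        * \<eta> powr a * u powr a * h u) \<partial>lborel)"
proof -
  let ?A = "\<lambda>\<mu>. ennreal (K * gauss_dens z \<mu> (1 / (m * \<eta>)) * E)"
  let ?B = "\<lambda>\<mu> u. indicator {0<..<1} u * ennreal (gauss_dens \<mu> 0 ((1 - u) / (\<eta> * u)) * \<eta> powr a * u powr a * h u)"
  have "(\<integral>\<^sup>+\<mu>. ?A \<mu> * prior_GM a h \<mu> \<eta> \<partial>lborel) = (\<integral>\<^sup>+\<mu>. (\<integral>\<^sup>+u. ?A \<mu> * ?B \<mu> u \<partial>lborel) \<partial>lborel)"
    unfolding prior_GM_def by (intro nn_integral_cong nn_integral_cmult[symmetric]) measurable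
  also have "\<dots> = (\<integral>\<^sup>+u. (\<integral>\<^sup>+\<mu>. ?A \<mu> * ?B \<mu> u \<partial>lborel) \<partial>lborel)"
    by (rule lborel_pair.Fubini'[where f="\<lambda>u \<mu>. ?A \<mu> * ?B \<mu> u"]) measurable
  also have "\<dots> = (\<integral>\<^sup>+u. indicator {0<..<1} u * ennreal (K * E * gauss_dens z 0 (1 / (m * \<eta>) + (1 - u) / (\<eta> * u))
        * \<eta> powr a * u powr a * h u) \<partial>lborel)"
  proof (intro nn_integral_cong)
    fix u :: real
    show "(\<integral>\<^sup>+\<mu>. ?A \<mu> * ?B \<mu> u \<partial>lborel) = indicator {0<..<1} u * ennreal (K * E * gauss_dens z 0 (1 / (m * \<eta>) + (1 - u) / (\<eta> * u))
        * \<eta> powr a * u powr a * h u)"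
    proof (cases "u \<in> {0<..<1}")
      case False
      then show ?thesis by simp
    next
      case True
      define t1 where "t1 = 1 / (m * \<eta>)"
      define t2 where "t2 = (1 - u) / (\<eta> * u)"
      have t1: "t1 > 0" using m eta by (simp add: t1_def)
      have t2: "t2 > 0" using True eta by (simp add: t2_def)
      define Kc where "Kc = K * E * gauss_dens z 0 (t1 + t2) * \<eta> powr a * u powr a * h u"
      have Kc: "Kc \<ge> 0" unfolding Kc_def using K E hnn[of u] gauss_pos[of "t1+t2" z 0] t1 t2
        by (intro mult_nonneg_nonneg) auto
      define cc where "cc = (t2 / (t1 + t2)) *\<^sub>R z + (t1 / (t1 + t2)) *\<^sub>R (0::real^'d)"
      have "(\<integral>\<^sup>+\<mu>. ?A \<mu> * ?B \<mu> u \<partial>lborel) = (\<integral>\<^sup>+\<mu>. ennreal Kc * ennreal (gauss_dens \<mu> cc (t1 * t2 / (t1 + t2))) \<partial>lborel)"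
      proof (intro nn_integral_cong)
        fix \<mu> :: "real^'d"
        have "K * gauss_dens z \<mu> t1 * E * (gauss_dens \<mu> 0 t2 * \<eta> powr a * u powr a * h u)
          = Kc * gauss_dens \<mu> cc (t1 * t2 / (t1 + t2))"
          unfolding Kc_def cc_def gauss_sym[of \<mu> 0] using gauss_prod[OF t1 t2, of z \<mu> 0]
          by (simp add: mult_ac)
        moreover have nn1: "K * gauss_dens z \<mu> t1 * E \<ge> 0" using K E gauss_pos[OF t1, of z \<mu>] by (intro mult_nonneg_nonneg) auto
        ultimately show "?A \<mu> * ?B \<mu> u = ennreal Kc * ennreal (gauss_dens \<mu> cc (t1 * t2 / (t1 + t2)))"
          using True unfolding t1_def[symmetric] t2_def[symmetric]
          by (simp only: ennreal_mult'[symmetric, OF nn1] ennreal_mult'[symmetric, OF Kc] indicator_simps mult_1 mem_Collect_eq greaterThanLessThan_iff simp_thms)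
      qed
      also have "\<dots> = ennreal Kc * (\<integral>\<^sup>+\<mu>. ennreal (gauss_dens \<mu> cc (t1 * t2 / (t1 + t2))) \<partial>lborel)"
        by (rule nn_integral_cmult) measurable
      also have "\<dots> = ennreal Kc"
        using t1 t2 by (simp add: gauss_int)
      finally show ?thesis using True by (simp add: Kc_def t1_def t2_def)
    qed
  qed
  finally show ?thesis .
qed

lemma gauss_zero_scaled:
  fixes z :: "real^'d"
  assumes "V > 0" "\<eta> > 0"
  shows "gauss_dens z 0 (V / \<eta>) = (2 * pi * V) powr (- real CARD('d) / 2) * \<eta> powr (real CARD('d) / 2)
     * exp (- ((norm z)\<^sup>2 / (2 * V)) * \<eta>)"
proof -
  define e where "e = - real CARD('d) / 2"
  have "2 * pi * (V / \<eta>) = (2 * pi * V) / \<eta>" by simp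
  then have "(2 * pi * (V / \<eta>)) powr e = (2 * pi * V) powr e / \<eta> powr e"
    using assms by (simp only: powr_divide less_imp_le pi_ge_zero mult_nonneg_nonneg zero_le_numeral)
  also have "\<dots> = (2 * pi * V) powr e * \<eta> powr (- e)"
    by (simp add: powr_minus divide_inverse)
  finally have P: "(2 * pi * (V / \<eta>)) powr (- real CARD('d) / 2) = (2 * pi * V) powr (- real CARD('d) / 2) * \<eta> powr (real CARD('d) / 2)"
    by (simp add: e_def)
  have Q: "- (norm (z - 0))\<^sup>2 / (2 * (V / \<eta>)) = - ((norm z)\<^sup>2 / (2 * V)) * \<eta>"
    using assms by simp
  show ?thesis unfolding gauss_dens_def P Q ..
qed

lemma eta_u:
  fixes z :: "real^'d" and h :: "real \<Rightarrow> real"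
  assumes m: "m > 0" and K: "K \<ge> 0" and S: "S > 0"
    and h[measurable]: "h \<in> borel_measurable borel" and hnn: "\<And>u. h u \<ge> 0"
    and p: "k + real CARD('d) / 2 + a > -1"
  shows "(\<integral>\<^sup>+\<eta>. indicator {0<..} \<eta> * (\<integral>\<^sup>+u. indicator {0<..<1} u * ennreal (K * (\<eta> powr k * exp (- \<eta> * S / 2))
        * gauss_dens z 0 (1 / (m * \<eta>) + (1 - u) / (\<eta> * u)) * \<eta> powr a * u powr a * h u) \<partial>lborel) \<partial>lborel)
    = (\<integral>\<^sup>+u. indicator {0<..<1} u * ennreal (K * (2 * pi * (1 / m + (1 - u) / u)) powr (- real CARD('d) / 2) * u powr a * h u
        * (Gamma (k + real CARD('d) / 2 + a + 1) / (S / 2 + (norm z)\<^sup>2 / (2 * (1 / m + (1 - u) / u))) powr (k + real CARD('d) / 2 + a + 1))) \<partial>lborel)"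
proof -
  let ?R = "\<lambda>\<eta> u. K * (\<eta> powr k * exp (- \<eta> * S / 2))
        * gauss_dens z 0 (1 / (m * \<eta>) + (1 - u) / (\<eta> * u)) * \<eta> powr a * u powr a * h u"
  have "(\<integral>\<^sup>+\<eta>. indicator {0<..} \<eta> * (\<integral>\<^sup>+u. indicator {0<..<1} u * ennreal (?R \<eta> u) \<partial>lborel) \<partial>lborel)
     = (\<integral>\<^sup>+\<eta>. (\<integral>\<^sup>+u. indicator {0<..} \<eta> * (indicator {0<..<1} u * ennreal (?R \<eta> u)) \<partial>lborel) \<partial>lborel)"
    by (intro nn_integral_cong nn_integral_cmult[symmetric]) measurable
  also have "\<dots> = (\<integral>\<^sup>+u. (\<integral>\<^sup>+\<eta>. indicator {0<..} \<eta> * (indicator {0<..<1} u * ennreal (?R \<eta> u)) \<partial>lborel) \<partial>lborel)"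
    by (rule lborel_pair.Fubini'[where f="\<lambda>u \<eta>. indicator {0<..} \<eta> * (indicator {0<..<1} u * ennreal (?R \<eta> u))"]) measurable
  also have "\<dots> = (\<integral>\<^sup>+u. indicator {0<..<1} u * ennreal (K * (2 * pi * (1 / m + (1 - u) / u)) powr (- real CARD('d) / 2) * u powr a * h u
        * (Gamma (k + real CARD('d) / 2 + a + 1) / (S / 2 + (norm z)\<^sup>2 / (2 * (1 / m + (1 - u) / u))) powr (k + real CARD('d) / 2 + a + 1))) \<partial>lborel)"
  proof (intro nn_integral_cong)
    fix u :: real
    show "(\<integral>\<^sup>+\<eta>. indicator {0<..} \<eta> * (indicator {0<..<1} u * ennreal (?R \<eta> u)) \<partial>lborel) =
      indicator {0<..<1} u * ennreal (K * (2 * pi * (1 / m + (1 - u) / u)) powr (- real CARD('d) / 2) * u powr a * h u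
        * (Gamma (k + real CARD('d) / 2 + a + 1) / (S / 2 + (norm z)\<^sup>2 / (2 * (1 / m + (1 - u) / u))) powr (k + real CARD('d) / 2 + a + 1)))"
    proof (cases "u \<in> {0<..<1}")
      case False
      then show ?thesis by simp
    next
      case True
      define V where "V = 1 / m + (1 - u) / u"
      have V: "V > 0" using True m by (simp add: V_def add_pos_pos)
      define C where "C = K * (2 * pi * V) powr (- real CARD('d) / 2) * u powr a * h u"
      have C: "C \<ge> 0" unfolding C_def using K hnn[of u] by (intro mult_nonneg_nonneg) auto
      define c where "c = S / 2 + (norm z)\<^sup>2 / (2 * V)"
      have c: "c > 0" using S V by (simp add: c_def add_pos_nonneg)
      define pp where "pp = k + real CARD('d) / 2 + a"
      have eq: "?R \<eta> u = C * (\<eta> powr pp * exp (- c * \<eta>))" if eta: "\<eta> > 0" for \<eta>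
      proof -
        have "1 / (m * \<eta>) + (1 - u) / (\<eta> * u) = V / \<eta>" using eta m True by (simp add: V_def field_simps)
        then have "?R \<eta> u = K * (\<eta> powr k * exp (- \<eta> * S / 2)) * ((2 * pi * V) powr (- real CARD('d) / 2) * \<eta> powr (real CARD('d) / 2)
             * exp (- ((norm z)\<^sup>2 / (2 * V)) * \<eta>)) * \<eta> powr a * u powr a * h u"
          using gauss_zero_scaled[OF V eta, of z] by simp
        also have "\<dots> = C * ((\<eta> powr k * \<eta> powr (real CARD('d) / 2) * \<eta> powr a) * (exp (- \<eta> * S / 2) * exp (- ((norm z)\<^sup>2 / (2 * V)) * \<eta>)))"
          by (simp add: C_def mult_ac)
        also have "\<eta> powr k * \<eta> powr (real CARD('d) / 2) * \<eta> powr a = \<eta> powr pp"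
          by (simp add: pp_def powr_add)
        also have "exp (- \<eta> * S / 2) * exp (- ((norm z)\<^sup>2 / (2 * V)) * \<eta>) = exp (- c * \<eta>)"
          by (simp add: c_def exp_add[symmetric] algebra_simps)
        finally show ?thesis .
      qed
      have "(\<integral>\<^sup>+\<eta>. indicator {0<..} \<eta> * (indicator {0<..<1} u * ennreal (?R \<eta> u)) \<partial>lborel)
          = (\<integral>\<^sup>+\<eta>. ennreal C * (indicator {0<..} \<eta> * ennreal (\<eta> powr pp * exp (- c * \<eta>))) \<partial>lborel)"
      proof (intro nn_integral_cong)
        fix \<eta> :: real
        show "indicator {0<..} \<eta> * (indicator {0<..<1} u * ennreal (?R \<eta> u)) = ennreal C * (indicator {0<..} \<eta> * ennreal (\<eta> powr pp * exp (- c * \<eta>)))"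
        proof (cases "\<eta> > 0")
          case e: True
          have e2: "ennreal (?R \<eta> u) = ennreal C * ennreal (\<eta> powr pp * exp (- c * \<eta>))"
            unfolding eq[OF e] by (rule ennreal_mult'[OF C])
          show ?thesis using e True unfolding e2 by simp
        qed simp
      qed
      also have "\<dots> = ennreal C * (\<integral>\<^sup>+\<eta>. indicator {0<..} \<eta> * ennreal (\<eta> powr pp * exp (- c * \<eta>)) \<partial>lborel)"
        by (rule nn_integral_cmult) measurable
      also have "\<dots> = ennreal C * ennreal (Gamma (pp + 1) / c powr (pp + 1))"
        using p c by (subst gamma_int) (auto simp: pp_def)
      also have "\<dots> = ennreal (C * (Gamma (pp + 1) / c powr (pp + 1)))"
        by (rule ennreal_mult'[OF C, symmetric])
      moreover have "indicator {0<..<1} u = (1::ennreal)" using True by simp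
      ultimately show ?thesis unfolding C_def c_def V_def pp_def by (simp only: mult_1)
    qed
  qed
  finally show ?thesis .
qed

lemma alg_abs:
  fixes K P M2 T2 Ma Ta Qa H G S2 W m q :: real
  assumes "P > 0" "M2 > 0" "T2 > 0" "Ma > 0" "Ta > 0" "Qa > 0" "S2 > 0" "W > 0" "m > 0" "q > 0"
  shows "K * (P * (M2 * T2)) * (Ma * Ta / Qa) * H * (G / (S2 * W)) * (m / q\<^sup>2)
    = (K * (M2 * Ma * m) * P * G * (1 / S2)) * (T2 * Ta * (1 / (Qa * q\<^sup>2)) / W * H)"
  using assms by (simp add: field_simps)

lemma pointwise_alg:
  fixes m t d a k S zz K H :: real
  assumes m: "m \<ge> 1" and t: "0 < t" "t < 1" and S: "S > 0" and zz: "zz \<ge> 0"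
    and nu: "\<nu> = d / 2 + a + 1"
  defines "q \<equiv> 1 + (m - 1) * t"
  defines "u \<equiv> m * t / q"
  shows "K * (2 * pi * (1 / m + (1 - u) / u)) powr (- d / 2) * u powr a * H
        * (Gamma (k + d / 2 + a + 1) / (S / 2 + zz / (2 * (1 / m + (1 - u) / u))) powr (k + d / 2 + a + 1))
        * (m / q\<^sup>2)
     = (K * m powr \<nu> * (2 * pi) powr (- d / 2) * Gamma (k + \<nu>) * (2 / S) powr (k + \<nu>))
       * (t powr (\<nu> - 1) * q powr (d / 2 - \<nu> - 1) / (1 + (m * zz / S) * t) powr (k + \<nu>) * H)"
proof -
  have q: "q > 0" unfolding q_def using m t by (simp add: add_pos_nonneg)
  have mt: "m * t > 0" using m t by simp
  have u: "u > 0" unfolding u_def using q mt by simp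
  have V: "1 / m + (1 - u) / u = 1 / (m * t)"
  proof -
    have a1: "(1 - u) / u = 1 / u - 1" using u by (simp add: diff_divide_distrib)
    have a2: "1 / u = q / (m * t)" unfolding u_def by simp
    have a3: "1 / m + q / (m * t) - 1 = 1 / (m * t)" unfolding q_def using m t by (simp add: field_simps)
    show ?thesis unfolding a1 a2 using a3 by simp
  qed
  define e where "e = k + \<nu>"
  have e1: "k + d / 2 + a + 1 = e" by (simp add: e_def nu)
  define w where "w = m * zz / S"
  have w: "1 + w * t > 0" unfolding w_def using m t S zz by (simp add: add_pos_nonneg)
  have c: "S / 2 + zz / (2 * (1 / (m * t))) = S / 2 * (1 + w * t)"
    unfolding w_def using S by (simp add: field_simps)
  have p1: "(2 * pi * (1 / (m * t))) powr (- d / 2) = (2 * pi) powr (- d / 2) * (m powr (d / 2) * t powr (d / 2))"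
  proof -
    have "(2 * pi * (1 / (m * t))) powr (- d / 2) = (2 * pi) powr (- d / 2) * (1 / (m * t)) powr (- d / 2)"
      by (rule powr_mult)
    also have "(1 / (m * t)) powr (- d / 2) = (m * t) powr (d / 2)"
      using mt by (simp add: powr_divide powr_minus)
    also have "\<dots> = m powr (d / 2) * t powr (d / 2)" by (rule powr_mult)
    finally show ?thesis .
  qed
  have p2: "u powr a = m powr a * t powr a / q powr a"
    unfolding u_def using m t q by (simp add: powr_divide powr_mult)
  have p3: "(S / 2 * (1 + w * t)) powr e = (S / 2) powr e * (1 + w * t) powr e"
    by (rule powr_mult)
  have p4: "(2 / S) powr e = 1 / (S / 2) powr e"
    using S by (simp add: powr_divide)
  have p5: "m powr \<nu> = m powr (d / 2) * m powr a * m"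
    using m by (simp add: nu powr_add)
  have p6: "t powr (\<nu> - 1) = t powr (d / 2) * t powr a"
    using t by (simp add: nu powr_add)
  have p7: "q powr (d / 2 - \<nu> - 1) = 1 / (q powr a * q\<^sup>2)"
  proof -
    have "d / 2 - \<nu> - 1 = - (a + 2)" by (simp add: nu)
    then have "q powr (d / 2 - \<nu> - 1) = 1 / q powr (a + 2)" by (simp only: powr_minus_divide)
    also have "q powr (a + 2) = q powr a * q\<^sup>2" using q by (simp only: powr_add powr_numeral)
    finally show ?thesis .
  qed
  have pos: "m powr (d / 2) > 0" "t powr (d / 2) > 0" "m powr a > 0" "t powr a > 0" "q powr a > 0"
     "(S / 2) powr e > 0" "(1 + w * t) powr e > 0" "(2 * pi) powr (- d / 2) > 0"
    using m t q S w by auto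
  show ?thesis
    unfolding V e1 c p1 p2 p3 e_def[symmetric] p4 p5 p6 p7 w_def[symmetric]
    by (rule alg_abs) (use pos q m in auto)
qed

lemma core:
  fixes z :: "real^'d" and h :: "real \<Rightarrow> real" and l :: nat
  assumes l: "l \<ge> 1" and S: "S > 0" and K: "K \<ge> 0"
    and h[measurable]: "h \<in> borel_measurable borel" and hnn: "\<And>u. h u \<ge> 0"
    and nu: "\<nu> = real CARD('d) / 2 + a + 1" and nupos: "\<nu> > 0"
  shows "(\<integral>\<^sup>+\<eta>. indicator {0<..} \<eta> * (\<integral>\<^sup>+\<mu>. ennreal (K * gauss_dens z \<mu> (1 / (real l * \<eta>))
              * (\<eta> powr ((real l - 1) * real CARD('d) / 2) * exp (- \<eta> * S / 2))) * prior_GM a h \<mu> \<eta> \<partial>lborel) \<partial>lborel)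
    = ennreal (K * real l powr \<nu> * (2 * pi) powr (- real CARD('d) / 2) * Gamma ((real l - 1) * real CARD('d) / 2 + \<nu>)
         * (2 / S) powr ((real l - 1) * real CARD('d) / 2 + \<nu>))
      * (\<integral>\<^sup>+u. indicator {0<..<1} u * ennreal (u powr (\<nu> - 1) * (1 + (real l - 1) * u) powr (real CARD('d) / 2 - \<nu> - 1)
           / (1 + (real l * (norm z)\<^sup>2 / S) * u) powr ((real l - 1) * real CARD('d) / 2 + \<nu>)
           * h (real l * u / (1 + (real l - 1) * u))) \<partial>lborel)"
proof -
  define m where "m = real l"
  have m: "m \<ge> 1" "m > 0" using l by (auto simp: m_def)
  define k where "k = (real l - 1) * real CARD('d) / 2"
  have k: "k \<ge> 0" using l by (simp add: k_def)
  define Gu where "Gu u = K * (2 * pi * (1 / m + (1 - u) / u)) powr (- real CARD('d) / 2) * u powr a * h u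
        * (Gamma (k + real CARD('d) / 2 + a + 1) / (S / 2 + (norm z)\<^sup>2 / (2 * (1 / m + (1 - u) / u))) powr (k + real CARD('d) / 2 + a + 1))" for u
  define Cst where "Cst = K * m powr \<nu> * (2 * pi) powr (- real CARD('d) / 2) * Gamma (k + \<nu>) * (2 / S) powr (k + \<nu>)"
  have Cst: "Cst \<ge> 0" unfolding Cst_def using K m S
    by (intro mult_nonneg_nonneg) (auto intro: Gamma_real_nonneg simp: k nupos add_nonneg_pos less_imp_le)
  define Jf where "Jf u = u powr (\<nu> - 1) * (1 + (m - 1) * u) powr (real CARD('d) / 2 - \<nu> - 1)
           / (1 + (m * (norm z)\<^sup>2 / S) * u) powr (k + \<nu>) * h (m * u / (1 + (m - 1) * u))" for u
  have "(\<integral>\<^sup>+\<eta>. indicator {0<..} \<eta> * (\<integral>\<^sup>+\<mu>. ennreal (K * gauss_dens z \<mu> (1 / (m * \<eta>))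
              * (\<eta> powr k * exp (- \<eta> * S / 2))) * prior_GM a h \<mu> \<eta> \<partial>lborel) \<partial>lborel)
     = (\<integral>\<^sup>+\<eta>. indicator {0<..} \<eta> * (\<integral>\<^sup>+u. indicator {0<..<1} u * ennreal (K * (\<eta> powr k * exp (- \<eta> * S / 2))
        * gauss_dens z 0 (1 / (m * \<eta>) + (1 - u) / (\<eta> * u)) * \<eta> powr a * u powr a * h u) \<partial>lborel) \<partial>lborel)"
  proof (intro nn_integral_cong)
    fix \<eta> :: real
    show "indicator {0<..} \<eta> * (\<integral>\<^sup>+\<mu>. ennreal (K * gauss_dens z \<mu> (1 / (m * \<eta>))
              * (\<eta> powr k * exp (- \<eta> * S / 2))) * prior_GM a h \<mu> \<eta> \<partial>lborel)
      = indicator {0<..} \<eta> * (\<integral>\<^sup>+u. indicator {0<..<1} u * ennreal (K * (\<eta> powr k * exp (- \<eta> * S / 2))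
        * gauss_dens z 0 (1 / (m * \<eta>) + (1 - u) / (\<eta> * u)) * \<eta> powr a * u powr a * h u) \<partial>lborel)"
    proof (cases "\<eta> > 0")
      case True
      show ?thesis
        by (subst inner_mu[OF True m(2) K _ h hnn]) auto
    qed simp
  qed
  also have "\<dots> = (\<integral>\<^sup>+u. indicator {0<..<1} u * ennreal (Gu u) \<partial>lborel)"
    unfolding Gu_def by (rule eta_u[OF m(2) K S h hnn]) (use k nu nupos in simp)
  also have "\<dots> = (\<integral>\<^sup>+t. indicator {0<..<1} t * ennreal (Gu (m * t / (1 + (m - 1) * t)) * (m / (1 + (m - 1) * t)\<^sup>2)) \<partial>lborel)"
    by (rule subst_lemma[OF m(1)]) (unfold Gu_def, measurable)
  also have "\<dots> = (\<integral>\<^sup>+t. ennreal Cst * (indicator {0<..<1} t * ennreal (Jf t)) \<partial>lborel)"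
  proof (intro nn_integral_cong)
    fix t :: real
    show "indicator {0<..<1} t * ennreal (Gu (m * t / (1 + (m - 1) * t)) * (m / (1 + (m - 1) * t)\<^sup>2))
       = ennreal Cst * (indicator {0<..<1} t * ennreal (Jf t))"
    proof (cases "t \<in> {0<..<1}")
      case True
      have "Gu (m * t / (1 + (m - 1) * t)) * (m / (1 + (m - 1) * t)\<^sup>2) = Cst * Jf t"
        unfolding Gu_def Cst_def Jf_def
        by (rule pointwise_alg[OF m(1) _ _ S _ nu]) (use True in auto)
      then show ?thesis using True by (simp add: ennreal_mult'[OF Cst])
    qed simp
  qed
  also have "\<dots> = ennreal Cst * (\<integral>\<^sup>+t. indicator {0<..<1} t * ennreal (Jf t) \<partial>lborel)"
    by (rule nn_integral_cmult) (unfold Jf_def, measurable)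
  finally show ?thesis unfolding m_def k_def Cst_def Jf_def .
qed

lemma chisq_rw:
  assumes "\<eta> > 0" "s > 0"
  shows "\<eta> * chisq_dens kk (\<eta> * s) = (s powr (kk / 2 - 1) / (2 powr (kk / 2) * Gamma (kk / 2))) * (\<eta> powr (kk / 2) * exp (- \<eta> * s / 2))"
proof -
  have e: "\<eta> powr (kk / 2) = \<eta> * \<eta> powr (kk / 2 - 1)"
    using assms powr_add[of \<eta> "kk / 2 - 1" 1] by simp
  have "(\<eta> * s) powr (kk / 2 - 1) = \<eta> powr (kk / 2 - 1) * s powr (kk / 2 - 1)" by (rule powr_mult)
  then show ?thesis unfolding chisq_dens_def e using assms by (simp add: mult_ac)
qed

lemma num_rw:
  fixes y xb \<mu> :: "real^'d"
  assumes eta: "\<eta> > 0" and N: "N > 0"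
  shows "gauss_dens y \<mu> (1 / \<eta>) * gauss_dens xb \<mu> (1 / (N * \<eta>))
    = (2 * pi * ((N + 1) / N)) powr (- real CARD('d) / 2) * \<eta> powr (real CARD('d) / 2)
      * exp (- ((norm (y - xb))\<^sup>2 / (2 * ((N + 1) / N))) * \<eta>)
      * gauss_dens ((1 / (N + 1)) *\<^sub>R (N *\<^sub>R xb + y)) \<mu> (1 / ((N + 1) * \<eta>))"
proof -
  have t1: "1 / \<eta> > 0" and t2: "1 / (N * \<eta>) > 0" using eta N by auto
  have T: "1 / \<eta> + 1 / (N * \<eta>) = ((N + 1) / N) / \<eta>" using eta N by (simp add: field_simps)
  have T2: "1 / \<eta> * (1 / (N * \<eta>)) / (1 / \<eta> + 1 / (N * \<eta>)) = 1 / ((N + 1) * \<eta>)"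
    using eta N by (simp add: field_simps)
  have M: "(1 / (N * \<eta>) / (1 / \<eta> + 1 / (N * \<eta>))) *\<^sub>R y + (1 / \<eta> / (1 / \<eta> + 1 / (N * \<eta>))) *\<^sub>R xb
      = (1 / (N + 1)) *\<^sub>R (N *\<^sub>R xb + y)"
  proof -
    have a: "1 / (N * \<eta>) / (1 / \<eta> + 1 / (N * \<eta>)) = 1 / (N + 1)" using eta N by (simp add: field_simps)
    have b: "1 / \<eta> / (1 / \<eta> + 1 / (N * \<eta>)) = N / (N + 1)" using eta N by (simp add: field_simps)
    show ?thesis unfolding a b by (simp add: scaleR_add_right algebra_simps)
  qed
  have G: "gauss_dens y xb (((N + 1) / N) / \<eta>) = gauss_dens (y - xb) 0 (((N + 1) / N) / \<eta>)"
    by (simp add: gauss_dens_def)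
  have V: "(N + 1) / N > 0" using N by simp
  note P = gauss_prod[OF t1 t2, of y \<mu> xb, unfolded T2 M, unfolded T G gauss_zero_scaled[OF V eta]]
  show ?thesis unfolding P gauss_sym[of \<mu>] ..
qed

lemma const_id:
  fixes N D s s' a \<nu> :: real
  assumes "N \<ge> 2" "D \<ge> 1" "s > 0" "s' > 0" "\<nu> = D / 2 + a + 1" "\<nu> > 0"
  shows "((s powr ((N - 1) * D / 2 - 1) / (2 powr ((N - 1) * D / 2) * Gamma ((N - 1) * D / 2))) * (2 * pi * ((N + 1) / N)) powr (- D / 2)
          * (N + 1) powr \<nu> * (2 * pi) powr (- D / 2) * Gamma ((N + 1 - 1) * D / 2 + \<nu>) * (2 / s') powr ((N + 1 - 1) * D / 2 + \<nu>))
       / ((s powr ((N - 1) * D / 2 - 1) / (2 powr ((N - 1) * D / 2) * Gamma ((N - 1) * D / 2)))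
          * N powr \<nu> * (2 * pi) powr (- D / 2) * Gamma ((N - 1) * D / 2 + \<nu>) * (2 / s) powr ((N - 1) * D / 2 + \<nu>))
     = (1 + 1 / N) powr \<nu> * Beta \<nu> ((N - 1) * D / 2) / Beta \<nu> (N * D / 2) * (s' / s) powr (- \<nu>)
       * (Gamma (N * D / 2) / Gamma ((N - 1) * D / 2) * (1 / (pi * s) * (N / (N + 1))) powr (D / 2) * (s' / s) powr (- N * D / 2))"
proof -
  note A = assms
  have N0: "N > 0" using A by simp
  define k where "k = (N - 1) * D / 2"
  define h where "h = D / 2"
  define r where "r = (N + 1) / N"
  have k: "k > 0" using A by (simp add: k_def)
  have h: "h > 0" using A by (simp add: h_def)
  have r: "r > 0" using N0 by (simp add: r_def)
  have nu: "\<nu> > 0" using A by simp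
  have s: "s > 0" "s' > 0" using A by auto
  have f1: "(2 * pi * ((N + 1) / N)) powr (- D / 2) = 1 / (2 powr h * pi powr h * r powr h)"
  proof -
    have "(2 * pi * ((N + 1) / N)) powr (- D / 2) = 1 / (2 * pi * r) powr h"
      by (simp add: r_def h_def powr_minus_divide[symmetric])
    also have "(2 * pi * r) powr h = 2 powr h * pi powr h * r powr h" by (simp add: powr_mult)
    finally show ?thesis .
  qed
  have f2: "(N + 1) powr \<nu> = r powr \<nu> * N powr \<nu>"
    using N0 by (simp add: r_def powr_divide)
  have e3: "(N + 1 - 1) * D / 2 + \<nu> = k + h + \<nu>" by (simp add: k_def h_def field_simps)
  have f4: "(2 / s') powr (k + h + \<nu>) = (2 powr k * 2 powr h * 2 powr \<nu>) / (s' powr k * s' powr h * s' powr \<nu>)"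
    using s by (simp add: powr_divide powr_add)
  have f5: "(2 / s) powr (k + \<nu>) = (2 powr k * 2 powr \<nu>) / (s powr k * s powr \<nu>)"
    using s by (simp add: powr_divide powr_add)
  have f6: "(1 + 1 / N) powr \<nu> = r powr \<nu>"
    using N0 by (simp add: r_def add_divide_distrib)
  have f7: "Beta \<nu> k = Gamma \<nu> * Gamma k / Gamma (k + \<nu>)" by (simp add: Beta_def add.commute)
  have e8: "N * D / 2 = k + h" by (simp add: k_def h_def field_simps)
  have f8: "Beta \<nu> (k + h) = Gamma \<nu> * Gamma (k + h) / Gamma (k + h + \<nu>)" by (simp add: Beta_def add_ac)
  have f9: "(s' / s) powr (- \<nu>) = s powr \<nu> / s' powr \<nu>"
    using s by (simp add: powr_divide powr_minus_divide)
  have f11: "(1 / (pi * s) * (N / (N + 1))) powr (D / 2) = 1 / (pi powr h * s powr h * r powr h)"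
  proof -
    have "1 / (pi * s) * (N / (N + 1)) = 1 / (pi * s * r)" using N0 by (simp add: r_def field_simps)
    then have "(1 / (pi * s) * (N / (N + 1))) powr (D / 2) = 1 / (pi * s * r) powr h"
      using s r by (simp add: h_def powr_divide)
    also have "(pi * s * r) powr h = pi powr h * s powr h * r powr h" by (simp add: powr_mult)
    finally show ?thesis .
  qed
  have f12: "(s' / s) powr (- N * D / 2) = (s powr k * s powr h) / (s' powr k * s' powr h)"
  proof -
    have "- N * D / 2 = - (k + h)" by (simp add: k_def h_def field_simps)
    then have "(s' / s) powr (- N * D / 2) = 1 / (s' / s) powr (k + h)" by (simp only: powr_minus_divide)
    also have "\<dots> = s powr (k + h) / s' powr (k + h)" using s by (simp add: powr_divide)
    also have "\<dots> = (s powr k * s powr h) / (s' powr k * s' powr h)" by (simp only: powr_add)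
    finally show ?thesis .
  qed
    define X1 where "X1 = s powr (k - 1)"
    define X2 where "X2 = 2 powr k"
    define X3 where "X3 = Gamma k"
    define X4 where "X4 = 2 powr h"
    define X5 where "X5 = pi powr h"
    define X6 where "X6 = r powr h"
    define X7 where "X7 = r powr \<nu>"
    define X8 where "X8 = N powr \<nu>"
    define X9 where "X9 = (2 * pi) powr (- D / 2)"
    define X10 where "X10 = Gamma (k + h + \<nu>)"
    define X11 where "X11 = 2 powr \<nu>"
    define X12 where "X12 = s' powr k"
    define X13 where "X13 = s' powr h"
    define X14 where "X14 = s' powr \<nu>"
    define X15 where "X15 = Gamma (k + \<nu>)"
    define X16 where "X16 = s powr k"
    define X17 where "X17 = s powr \<nu>"
    define X18 where "X18 = Gamma \<nu>"
    define X19 where "X19 = Gamma (k + h)"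
    define X20 where "X20 = s powr h"
    have pos: "X1 > 0" "X2 > 0" "X3 > 0" "X4 > 0" "X5 > 0" "X6 > 0" "X7 > 0" "X8 > 0" "X9 > 0" "X10 > 0"
      "X11 > 0" "X12 > 0" "X13 > 0" "X14 > 0" "X15 > 0" "X16 > 0" "X17 > 0" "X18 > 0" "X19 > 0" "X20 > 0"
      unfolding X1_def X2_def X3_def X4_def X5_def X6_def X7_def X8_def X9_def X10_def X11_def X12_def
        X13_def X14_def X15_def X16_def X17_def X18_def X19_def X20_def
      using s r N0 k h nu by (auto intro!: Gamma_real_pos)
  show ?thesis
    unfolding k_def[symmetric] f1 f2 e3 f4 f5 f6 f7 f12 f9 f11 e8 f8
    unfolding X1_def[symmetric] X2_def[symmetric] X3_def[symmetric] X4_def[symmetric] X5_def[symmetric]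
      X6_def[symmetric] X7_def[symmetric] X8_def[symmetric] X9_def[symmetric] X10_def[symmetric]
      X11_def[symmetric] X12_def[symmetric] X13_def[symmetric] X14_def[symmetric] X15_def[symmetric]
      X16_def[symmetric] X17_def[symmetric] X18_def[symmetric] X19_def[symmetric] X20_def[symmetric]
    using pos by (simp add: field_simps)
qed

theorem lemmaA1:
  fixes x :: "nat \<Rightarrow> real^'d" and y :: "real^'d" and n :: nat and a :: real
    and f :: "real \<Rightarrow> real"
  defines "d \<equiv> real CARD('d)"
  defines "\<nu> \<equiv> d / 2 + a + 1"
  defines "xb \<equiv> sample_mean x n" and "s \<equiv> sample_ss x n"
  defines "xb' \<equiv> mean_upd n xb y" and "s' \<equiv> ss_upd n xb s y"
  assumes n: "n \<ge> 2"
    and s_pos: "s > 0"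
    and nu_pos: "\<nu> > 0"
    and f_nonneg: "\<forall>u\<in>{0<..<1}. f u \<ge> 0"
    and f_meas: "f \<in> borel_measurable (restrict_space lborel {0<..<1})"
    and den_pos: "0 < pred_den n (prior_GM a f) xb s"
    and den_fin: "pred_den n (prior_GM a f) xb s < \<infinity>"
  shows "bayes_pred n (prior_GM a f) y xb s =
     (1 + 1 / real n) powr \<nu> * Beta \<nu> (real (n - 1) * d / 2) / Beta \<nu> (real n * d / 2)
     * (s' / s) powr (- \<nu>)
     * (J_GM d \<nu> f (n + 1) (real (n + 1) * (norm xb')\<^sup>2 / s')
        / J_GM d \<nu> f n (real n * (norm xb)\<^sup>2 / s))
     * pred_R n y xb s"
proof -
  define fz where "fz u = (if u \<in> {0<..<1} then f u else 0)" for u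
  have fz_meas[measurable]: "fz \<in> borel_measurable borel"
    using f_meas unfolding fz_def[abs_def]
    by (subst (asm) measurable_restrict_space_iff) auto
  have fz_nn: "fz u \<ge> 0" for u using f_nonneg by (simp add: fz_def)
  have prior_eq: "prior_GM a f = prior_GM a fz"
    unfolding prior_GM_def by (intro ext nn_integral_cong) (auto simp: fz_def indicator_def)
  have J_eq: "J_GM d \<nu> f l w = J_GM d \<nu> fz l w" if l: "l \<ge> 1" for l w
    unfolding J_GM_def
  proof (intro arg_cong[where f=enn2real] nn_integral_cong)
    fix u :: real
    show "indicator {0<..<1} u * ennreal (u powr (\<nu> - 1) * (1 + (real l - 1) * u) powr (d / 2 - \<nu> - 1) /
             (1 + w * u) powr ((real l - 1) * d / 2 + \<nu>) * f (real l * u / (1 + (real l - 1) * u))) =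
          indicator {0<..<1} u * ennreal (u powr (\<nu> - 1) * (1 + (real l - 1) * u) powr (d / 2 - \<nu> - 1) /
             (1 + w * u) powr ((real l - 1) * d / 2 + \<nu>) * fz (real l * u / (1 + (real l - 1) * u)))"
    proof (cases "u \<in> {0<..<1}")
      case True
      have q: "1 + (real l - 1) * u > 0" using l True by (simp add: add_pos_nonneg)
      have "real l * u / (1 + (real l - 1) * u) \<in> {0<..<1}"
        using q l True by (auto simp: field_simps)
      then show ?thesis by (simp add: fz_def)
    qed simp
  qed
  have N: "real n \<ge> 2" using n by simp
  have Nm1: "real (n - 1) = real n - 1" using n by simp
  have Nm1': "real (n - Suc 0) = real n - 1" using n by simp
  have Np1: "real (n + 1) = real n + 1" by simp
  have D: "d \<ge> 1" unfolding d_def by simp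
  define k2 where "k2 = (real n - 1) * d / 2"
  define Kd where "Kd = s powr (k2 - 1) / (2 powr k2 * Gamma k2)"
  have k2: "k2 > 0" using N D by (simp add: k2_def)
  have Kd: "Kd \<ge> 0" unfolding Kd_def using Gamma_real_pos[OF k2] by simp
  define Kn where "Kn = Kd * (2 * pi * ((real n + 1) / real n)) powr (- d / 2)"
  have Kn: "Kn \<ge> 0" using Kd by (simp add: Kn_def)
  have s': "s' > 0" unfolding s'_def ss_upd_def using s_pos by (simp add: add_pos_nonneg)
  have nu: "\<nu> = real CARD('d) / 2 + a + 1" by (simp add: \<nu>_def d_def)
  define JJ where "JJ l z S = (\<integral>\<^sup>+u. indicator {0<..<1} u * ennreal (u powr (\<nu> - 1) * (1 + (real l - 1) * u) powr (real CARD('d) / 2 - \<nu> - 1)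
           / (1 + (real l * (norm z)\<^sup>2 / S) * u) powr ((real l - 1) * real CARD('d) / 2 + \<nu>)
           * fz (real l * u / (1 + (real l - 1) * u))) \<partial>lborel)" for l and z :: "real^'d" and S
  define Cst where "Cst K l S = K * real l powr \<nu> * (2 * pi) powr (- real CARD('d) / 2) * Gamma ((real l - 1) * real CARD('d) / 2 + \<nu>)
         * (2 / S) powr ((real l - 1) * real CARD('d) / 2 + \<nu>)" for K l S
  have core': "(\<integral>\<^sup>+\<eta>. indicator {0<..} \<eta> * (\<integral>\<^sup>+\<mu>. ennreal (K * gauss_dens z \<mu> (1 / (real l * \<eta>))
              * (\<eta> powr ((real l - 1) * real CARD('d) / 2) * exp (- \<eta> * S / 2))) * prior_GM a fz \<mu> \<eta> \<partial>lborel) \<partial>lborel)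
     = ennreal (Cst K l S) * JJ l z S" if "l \<ge> 1" "S > 0" "K \<ge> 0" for l z S K
    unfolding Cst_def JJ_def by (rule core[OF that fz_meas fz_nn nu nu_pos])
  have den: "pred_den n (prior_GM a fz) xb s = ennreal (Cst Kd n s) * JJ n xb s"
  proof -
    have "pred_den n (prior_GM a fz) xb s = (\<integral>\<^sup>+\<eta>. indicator {0<..} \<eta> * (\<integral>\<^sup>+\<mu>. ennreal (Kd * gauss_dens xb \<mu> (1 / (real n * \<eta>))
              * (\<eta> powr ((real n - 1) * real CARD('d) / 2) * exp (- \<eta> * s / 2))) * prior_GM a fz \<mu> \<eta> \<partial>lborel) \<partial>lborel)"
      unfolding pred_den_def
    proof (intro nn_integral_cong)
      fix \<eta> :: real
      show "indicator {0<..} \<eta> * (\<integral>\<^sup>+\<mu>. ennreal (gauss_dens xb \<mu> (1 / (real n * \<eta>)) * \<eta> * chisq_dens (real (n - 1) * real CARD('d)) (\<eta> * s)) * prior_GM a fz \<mu> \<eta> \<partial>lborel)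
        = indicator {0<..} \<eta> * (\<integral>\<^sup>+\<mu>. ennreal (Kd * gauss_dens xb \<mu> (1 / (real n * \<eta>))
              * (\<eta> powr ((real n - 1) * real CARD('d) / 2) * exp (- \<eta> * s / 2))) * prior_GM a fz \<mu> \<eta> \<partial>lborel)"
      proof (cases "\<eta> > 0")
        case True
        have "gauss_dens xb \<mu> (1 / (real n * \<eta>)) * \<eta> * chisq_dens (real (n - 1) * real CARD('d)) (\<eta> * s)
           = Kd * gauss_dens xb \<mu> (1 / (real n * \<eta>)) * (\<eta> powr ((real n - 1) * real CARD('d) / 2) * exp (- \<eta> * s / 2))" for \<mu>
          unfolding mult.assoc[of _ \<eta>] chisq_rw[OF True s_pos] Kd_def k2_def Nm1 d_def
          by (simp add: mult_ac)
        then show ?thesis by (simp only:)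
      qed simp
    qed
    also have "\<dots> = ennreal (Cst Kd n s) * JJ n xb s"
      by (rule core'[OF _ s_pos Kd]) (use n in simp)
    finally show ?thesis .
  qed
  have num: "pred_num n (prior_GM a fz) y xb s = ennreal (Cst Kn (n + 1) s') * JJ (n + 1) xb' s'"
  proof -
    have "pred_num n (prior_GM a fz) y xb s = (\<integral>\<^sup>+\<eta>. indicator {0<..} \<eta> * (\<integral>\<^sup>+\<mu>. ennreal (Kn * gauss_dens xb' \<mu> (1 / (real (n + 1) * \<eta>))
              * (\<eta> powr ((real (n + 1) - 1) * real CARD('d) / 2) * exp (- \<eta> * s' / 2))) * prior_GM a fz \<mu> \<eta> \<partial>lborel) \<partial>lborel)"
      unfolding pred_num_def
    proof (intro nn_integral_cong)
      fix \<eta> :: real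
      show "indicator {0<..} \<eta> * (\<integral>\<^sup>+\<mu>. ennreal (gauss_dens y \<mu> (1 / \<eta>) * gauss_dens xb \<mu> (1 / (real n * \<eta>)) * \<eta> * chisq_dens (real (n - 1) * real CARD('d)) (\<eta> * s)) * prior_GM a fz \<mu> \<eta> \<partial>lborel)
        = indicator {0<..} \<eta> * (\<integral>\<^sup>+\<mu>. ennreal (Kn * gauss_dens xb' \<mu> (1 / (real (n + 1) * \<eta>))
              * (\<eta> powr ((real (n + 1) - 1) * real CARD('d) / 2) * exp (- \<eta> * s' / 2))) * prior_GM a fz \<mu> \<eta> \<partial>lborel)"
      proof (cases "\<eta> > 0")
        case True
        have Npos: "real n > 0" using N by simp
        have e1: "\<eta> powr ((real (n + 1) - 1) * real CARD('d) / 2) = \<eta> powr (real CARD('d) / 2) * \<eta> powr ((real n - 1) * real CARD('d) / 2)"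
        proof -
          have "(real (n + 1) - 1) * real CARD('d) / 2 = real CARD('d) / 2 + (real n - 1) * real CARD('d) / 2"
            by (simp add: field_simps)
          then show ?thesis by (simp only: powr_add)
        qed
        have e2: "exp (- \<eta> * s' / 2) = exp (- ((norm (y - xb))\<^sup>2 / (2 * ((real n + 1) / real n))) * \<eta>) * exp (- \<eta> * s / 2)"
          unfolding s'_def ss_upd_def exp_add[symmetric] using Npos by (simp add: field_simps)
        have xb': "xb' = (1 / (real n + 1)) *\<^sub>R (real n *\<^sub>R xb + y)" by (simp add: xb'_def mean_upd_def)
        have "gauss_dens y \<mu> (1 / \<eta>) * gauss_dens xb \<mu> (1 / (real n * \<eta>)) * \<eta> * chisq_dens (real (n - 1) * real CARD('d)) (\<eta> * s)
           = Kn * gauss_dens xb' \<mu> (1 / (real (n + 1) * \<eta>)) * (\<eta> powr ((real (n + 1) - 1) * real CARD('d) / 2) * exp (- \<eta> * s' / 2))" for \<mu>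
          unfolding mult.assoc[of _ \<eta>] chisq_rw[OF True s_pos] num_rw[OF True Npos] e1 e2 xb' unfolding Np1 Nm1
          by (simp add: Kn_def Kd_def k2_def Nm1' d_def mult_ac)
        then show ?thesis by (simp only:)
      qed simp
    qed
    also have "\<dots> = ennreal (Cst Kn (n + 1) s') * JJ (n + 1) xb' s'"
      by (rule core'[OF _ s' Kn]) simp
    finally show ?thesis .
  qed
  have Jn: "J_GM d \<nu> f n (real n * (norm xb)\<^sup>2 / s) = enn2real (JJ n xb s)"
  proof -
    have "n \<ge> 1" using n by simp
    then show ?thesis by (subst J_eq) (simp_all add: J_GM_def JJ_def d_def)
  qed
  have Jn1: "J_GM d \<nu> f (n + 1) (real (n + 1) * (norm xb')\<^sup>2 / s') = enn2real (JJ (n + 1) xb' s')"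
    by (subst J_eq) (simp_all add: J_GM_def JJ_def d_def)
  have Cst_nn: "Cst K l S \<ge> 0" if "K \<ge> 0" "l \<ge> 1" "S > 0" for K l S
  proof -
    have "(real l - 1) * real CARD('d) / 2 + \<nu> > 0" using that nu_pos by (simp add: add_nonneg_pos)
    then show ?thesis unfolding Cst_def using that
      by (intro mult_nonneg_nonneg) (auto intro: Gamma_real_nonneg)
  qed
  have Cn: "Cst Kn (n + 1) s' \<ge> 0" using Cst_nn[OF Kn _ s'] by simp
  have Cd: "Cst Kd n s \<ge> 0" using Cst_nn[OF Kd _ s_pos] n by simp
  have bp: "bayes_pred n (prior_GM a f) y xb s = Cst Kn (n + 1) s' * enn2real (JJ (n + 1) xb' s') / (Cst Kd n s * enn2real (JJ n xb s))"
    unfolding bayes_pred_def prior_eq num den enn2real_mult enn2real_ennreal[OF Cn] enn2real_ennreal[OF Cd] ..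
  have sp: "1 + 1 / s * (real n / (real n + 1)) * (norm (y - xb))\<^sup>2 = s' / s"
  proof -
    have "s + s * real n > 0" using s_pos by (simp add: add_pos_nonneg)
    then show ?thesis unfolding s'_def ss_upd_def using s_pos by (simp add: field_simps)
  qed
  have CI: "Cst Kn (n + 1) s' / Cst Kd n s = (1 + 1 / real n) powr \<nu> * Beta \<nu> (real (n - 1) * d / 2) / Beta \<nu> (real n * d / 2)
     * (s' / s) powr (- \<nu>) * pred_R n y xb s"
    unfolding Cst_def Kn_def Kd_def k2_def pred_R_def sp Np1 Nm1 d_def
    by (rule const_id) (use N s_pos s' nu nu_pos in auto)
  have ac: "A * B * Q = A * Q * B" for A B Q :: real by (simp add: mult_ac)
  show ?thesis
    unfolding bp Jn Jn1 times_divide_times_eq[symmetric] CI ac[of _ "pred_R n y xb s"] ..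
qed

end
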